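(* Let $c\in[\frac12,1)$ and let $d,\delta$ be positive integers with $d\ge\delta$. Let $G$ be a graph with maximum degree $\delta$ and $w:V(G)\to[0,1]$ a weight function with $w(V(G))=1$, and assume $G$ has no $d$-bounded $(w,c)$-balanced separator. Fix a bijection $\mathcal{O}:V(G)\to\{1,\dots,|V(G)|\}$ and let $\beta$ be the star-free bag of $G$. Let $F$ be a forcer for $G$. Then $G[\beta]$ is $F$-free.
   Context: For $X\subseteq V(G)$, $w(X)=\sum_{x\in X}w(x)$; $N(X)$ is the set of vertices outside $X$ with a neighbor in $X$, $N[X]=N(X)\cup X$; $N^d[v]$ is the set of vertices at distance at most $d$ from $v$. $X$ is $d$-bounded if $X\subseteq N^d[v]$ for some $v$; $X$ is a $(w,c)$-balanced separator if every connected component $D$ of $G\setminus X$ has $w(D)\le c$. For $v\in V(G)$, the canonical star separation $S_v=(A_v,C_v,B_v)$: $B_v$ is the (under these assumptions unique) largest-weight connected component of $G\setminus N[v]$, $C_v$ consists of $v$ and every vertex of $N(v)$ with a neighbor in $B_v$, and $A_v=V(G)\setminus(B_v\cup C_v)$. Vertices $u,v$ are star twins if $B_u=B_v$, $C_u\setminus\{u\}=C_v\setminus\{v\}$, $A_u\setminus\{v\}=A_v\setminus\{u\}$. The partial order $\le_A$: $x\le_A y$ if $x=y$, or $x,y$ are star twins and $\mathcal{O}(x)<\mathcal{O}(y)$, or $x,y$ are not star twins and $y\in A_x$. Let $X$ be the set of minimal elements of $\le_A$; the star-free bag is $\beta=\bigcap_{x\in X}(B_x\cup C_x)$. For $Y\subseteq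 V(G)$ and $v\in V(G)\setminus Y$, $v$ breaks $Y$ if for every connected component $D$ of $G\setminus N[v]$, $Y\not\subseteq N[D]$. A graph $F$ is a forcer for $G$ if for every $Y\subseteq V(G)$ with $G[Y]$ isomorphic to $F$ there is $v\in Y$ that breaks $Y\setminus\{v\}$. *)

theory Defs
  imports Complex_Main
begin

definition graph :: "'a set \<Rightarrow> ('a \<Rightarrow> 'a \<Rightarrow> bool) \<Rightarrow> bool" where
  "graph V E \<longleftrightarrow> finite V \<and> (\<forall>x y. E x y \<longrightarrow> x \<in> V \<and> y \<in> V)
     \<and> (\<forall>x y. E x y \<longrightarrow> E y x) \<and> (\<forall>x. \<not> E x x)"

definition degree :: "'a set \<Rightarrow> ('a \<Rightarrow> 'a \<Rightarrow> bool) \<Rightarrow> 'a \<Rightarrow> nat" where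
  "degree V E v = card {u \<in> V. E v u}"

definition max_degree :: "'a set \<Rightarrow> ('a \<Rightarrow> 'a \<Rightarrow> bool) \<Rightarrow> nat" where
  "max_degree V E = Max (degree V E ` V)"

definition wsum :: "('a \<Rightarrow> real) \<Rightarrow> 'a set \<Rightarrow> real" where
  "wsum w X = (\<Sum>x\<in>X. w x)"

definition nbhd :: "'a set \<Rightarrow> ('a \<Rightarrow> 'a \<Rightarrow> bool) \<Rightarrow> 'a set \<Rightarrow> 'a set" where
  "nbhd V E X = {y \<in> V - X. \<exists>x\<in>X. E x y}"

definition cnbhd :: "'a set \<Rightarrow> ('a \<Rightarrow> 'a \<Rightarrow> bool) \<Rightarrow> 'a set \<Rightarrow> 'a set" where
  "cnbhd V E X = nbhd V E X \<union> X"

definition ball_d :: "'a set \<Rightarrow> ('a \<Rightarrow> 'a \<Rightarrow> bool) \<Rightarrow> nat \<Rightarrow> 'a \<Rightarrow> 'a set" where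
  "ball_d V E d v = {u \<in> V. \<exists>k\<le>d. (E ^^ k) v u}"

definition d_bounded :: "'a set \<Rightarrow> ('a \<Rightarrow> 'a \<Rightarrow> bool) \<Rightarrow> nat \<Rightarrow> 'a set \<Rightarrow> bool" where
  "d_bounded V E d X \<longleftrightarrow> (\<exists>v\<in>V. X \<subseteq> ball_d V E d v)"

definition component :: "('a \<Rightarrow> 'a \<Rightarrow> bool) \<Rightarrow> 'a set \<Rightarrow> 'a set \<Rightarrow> bool" where
  "component E S D \<longleftrightarrow>
     (\<exists>x\<in>S. D = {y. (\<lambda>a b. a \<in> S \<and> b \<in> S \<and> E a b)\<^sup>*\<^sup>* x y})"

definition balanced_sep ::
  "'a set \<Rightarrow> ('a \<Rightarrow> 'a \<Rightarrow> bool) \<Rightarrow> ('a \<Rightarrow> real) \<Rightarrow> real \<Rightarrow> 'a set \<Rightarrow> bool" where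
  "balanced_sep V E w c X \<longleftrightarrow> X \<subseteq> V \<and>
     (\<forall>D. component E (V - X) D \<longrightarrow> wsum w D \<le> c)"

definition Bv :: "'a set \<Rightarrow> ('a \<Rightarrow> 'a \<Rightarrow> bool) \<Rightarrow> ('a \<Rightarrow> real) \<Rightarrow> 'a \<Rightarrow> 'a set" where
  "Bv V E w v = (THE D. component E (V - cnbhd V E {v}) D \<and>
      (\<forall>D'. component E (V - cnbhd V E {v}) D' \<longrightarrow> wsum w D' \<le> wsum w D))"

definition Cv :: "'a set \<Rightarrow> ('a \<Rightarrow> 'a \<Rightarrow> bool) \<Rightarrow> ('a \<Rightarrow> real) \<Rightarrow> 'a \<Rightarrow> 'a set" where
  "Cv V E w v = {v} \<union> {u \<in> nbhd V E {v}. \<exists>b\<in>Bv V E w v. E u b}"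

definition Av :: "'a set \<Rightarrow> ('a \<Rightarrow> 'a \<Rightarrow> bool) \<Rightarrow> ('a \<Rightarrow> real) \<Rightarrow> 'a \<Rightarrow> 'a set" where
  "Av V E w v = V - (Bv V E w v \<union> Cv V E w v)"

definition star_twins ::
  "'a set \<Rightarrow> ('a \<Rightarrow> 'a \<Rightarrow> bool) \<Rightarrow> ('a \<Rightarrow> real) \<Rightarrow> 'a \<Rightarrow> 'a \<Rightarrow> bool" where
  "star_twins V E w u v \<longleftrightarrow> Bv V E w u = Bv V E w v
     \<and> Cv V E w u - {u} = Cv V E w v - {v}
     \<and> Av V E w u - {v} = Av V E w v - {u}"

definition leA ::
  "'a set \<Rightarrow> ('a \<Rightarrow> 'a \<Rightarrow> bool) \<Rightarrow> ('a \<Rightarrow> real) \<Rightarrow> ('a \<Rightarrow> nat) \<Rightarrow> 'a \<Rightarrow> 'a \<Rightarrow> bool" where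
  "leA V E w ord x y \<longleftrightarrow> x = y
     \<or> (star_twins V E w x y \<and> ord x < ord y)
     \<or> (\<not> star_twins V E w x y \<and> y \<in> Av V E w x)"

definition minimal_A ::
  "'a set \<Rightarrow> ('a \<Rightarrow> 'a \<Rightarrow> bool) \<Rightarrow> ('a \<Rightarrow> real) \<Rightarrow> ('a \<Rightarrow> nat) \<Rightarrow> 'a set" where
  "minimal_A V E w ord = {x \<in> V. \<forall>y\<in>V. leA V E w ord y x \<longrightarrow> y = x}"

definition star_free_bag ::
  "'a set \<Rightarrow> ('a \<Rightarrow> 'a \<Rightarrow> bool) \<Rightarrow> ('a \<Rightarrow> real) \<Rightarrow> ('a \<Rightarrow> nat) \<Rightarrow> 'a set" where
  "star_free_bag V E w ord = V \<inter> (\<Inter>x\<in>minimal_A V E w ord. Bv V E w x \<union> Cv V E w x)"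

definition breaks :: "'a set \<Rightarrow> ('a \<Rightarrow> 'a \<Rightarrow> bool) \<Rightarrow> 'a \<Rightarrow> 'a set \<Rightarrow> bool" where
  "breaks V E v Y \<longleftrightarrow> v \<in> V - Y \<and>
     (\<forall>D. component E (V - cnbhd V E {v}) D \<longrightarrow> \<not> Y \<subseteq> cnbhd V E D)"

definition induced_iso ::
  "('a \<Rightarrow> 'a \<Rightarrow> bool) \<Rightarrow> 'a set \<Rightarrow> 'b set \<Rightarrow> ('b \<Rightarrow> 'b \<Rightarrow> bool) \<Rightarrow> bool" where
  "induced_iso E Y VF EF \<longleftrightarrow>
     (\<exists>f. bij_betw f Y VF \<and> (\<forall>x\<in>Y. \<forall>y\<in>Y. E x y \<longleftrightarrow> EF (f x) (f y)))"

definition forcer ::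
  "'b set \<Rightarrow> ('b \<Rightarrow> 'b \<Rightarrow> bool) \<Rightarrow> 'a set \<Rightarrow> ('a \<Rightarrow> 'a \<Rightarrow> bool) \<Rightarrow> bool" where
  "forcer VF EF V E \<longleftrightarrow> (\<forall>Y. Y \<subseteq> V \<and> induced_iso E Y VF EF \<longrightarrow>
      (\<exists>v\<in>Y. breaks V E v (Y - {v})))"

definition F_free ::
  "('a \<Rightarrow> 'a \<Rightarrow> bool) \<Rightarrow> 'a set \<Rightarrow> 'b set \<Rightarrow> ('b \<Rightarrow> 'b \<Rightarrow> bool) \<Rightarrow> bool" where
  "F_free E S VF EF \<longleftrightarrow> (\<nexists>Y. Y \<subseteq> S \<and> induced_iso E Y VF EF)"

end

theory Submission
  imports Defs
begin

lemma comp_sub: "component E S D \<Longrightarrow> D \<subseteq> S"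
proof
  fix y assume "component E S D" "y \<in> D"
  then obtain x where x: "x \<in> S" "D = {y. (\<lambda>a b. a \<in> S \<and> b \<in> S \<and> E a b)\<^sup>*\<^sup>* x y}"
    unfolding component_def by blast
  with \<open>y \<in> D\<close> have "(\<lambda>a b. a \<in> S \<and> b \<in> S \<and> E a b)\<^sup>*\<^sup>* x y" by blast
  then show "y \<in> S" using x(1) by (induction rule: rtranclp_induct) auto
qed

lemma rtranclp_sym_aux:
  assumes "\<And>a b. R a b \<Longrightarrow> R b a" "R\<^sup>*\<^sup>* x y" shows "R\<^sup>*\<^sup>* y x"
  using assms(2)
proof (induction rule: rtranclp_induct)
  case base then show ?case by simp
next
  case (step y z) then show ?case using assms(1) by (meson converse_rtranclp_into_rtranclp)
qed

lemma comp_eq: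
  assumes G: "graph V E" and c1: "component E S D1" and c2: "component E S D2"
    and t: "t \<in> D1" "t \<in> D2"
  shows "D1 = D2"
proof -
  let ?R = "\<lambda>a b. a \<in> S \<and> b \<in> S \<and> E a b"
  have sym: "\<And>a b. ?R a b \<Longrightarrow> ?R b a" using G unfolding graph_def by blast
  obtain x1 where x1: "x1 \<in> S" "D1 = {y. ?R\<^sup>*\<^sup>* x1 y}" using c1 unfolding component_def by blast
  obtain x2 where x2: "x2 \<in> S" "D2 = {y. ?R\<^sup>*\<^sup>* x2 y}" using c2 unfolding component_def by blast
  have a: "?R\<^sup>*\<^sup>* x1 t" "?R\<^sup>*\<^sup>* x2 t" using t x1 x2 by auto
  have "?R\<^sup>*\<^sup>* x1 x2" using a(1) rtranclp_sym_aux[OF sym a(2)] by (meson rtranclp_trans)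
  moreover have "?R\<^sup>*\<^sup>* x2 x1" using a(2) rtranclp_sym_aux[OF sym a(1)] by (meson rtranclp_trans)
  ultimately show ?thesis using x1 x2 by (auto intro: rtranclp_trans)
qed

lemma comps_finite:
  assumes "finite S" shows "finite {D. component E S D}"
proof -
  have "{D. component E S D} \<subseteq> (\<lambda>x. {y. (\<lambda>a b. a \<in> S \<and> b \<in> S \<and> E a b)\<^sup>*\<^sup>* x y}) ` S"
    unfolding component_def by blast
  then show ?thesis using assms finite_surj by blast
qed

context
  fixes V :: "'a set" and E :: "'a \<Rightarrow> 'a \<Rightarrow> bool" and w :: "'a \<Rightarrow> real"
    and c :: real and d :: nat
  assumes G: "graph V E" and W: "\<forall>v\<in>V. 0 \<le> w v" and S1: "wsum w V = 1"
    and C: "1/2 \<le> c" and D: "0 < d"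
    and NB: "\<not> (\<exists>X. d_bounded V E d X \<and> balanced_sep V E w c X)"
begin

lemma finV: "finite V" using G unfolding graph_def by blast
lemma symE: "E a b \<Longrightarrow> E b a" using G unfolding graph_def by blast
lemma inV: "E a b \<Longrightarrow> a \<in> V \<and> b \<in> V" using G unfolding graph_def by blast

lemma wsum_le: "X \<subseteq> V \<Longrightarrow> wsum w X \<le> 1"
  using S1 W finV unfolding wsum_def by (metis sum_mono2 subsetD Diff_iff)

lemma heavy_unique:
  assumes "S \<subseteq> V" "component E S D1" "component E S D2" "wsum w D1 > c" "wsum w D2 > c"
  shows "D1 = D2"
proof (rule ccontr)
  assume ne: "D1 \<noteq> D2"
  have disj: "D1 \<inter> D2 = {}" using comp_eq[OF G assms(2,3)] ne by blast
  have sub: "D1 \<subseteq> V" "D2 \<subseteq> V" using comp_sub assms by blast+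
  have fin: "finite D1" "finite D2" using sub finV finite_subset by blast+
  have "wsum w (D1 \<union> D2) = wsum w D1 + wsum w D2"
    unfolding wsum_def using sum.union_disjoint[OF fin disj] by simp
  moreover have "wsum w (D1 \<union> D2) \<le> 1" using wsum_le sub by blast
  ultimately show False using assms C by linarith
qed

lemma exists_heavy:
  assumes v: "v \<in> V"
  shows "\<exists>D. component E (V - cnbhd V E {v}) D \<and> wsum w D > c"
proof -
  let ?X = "cnbhd V E {v}"
  have sub: "?X \<subseteq> V" using v unfolding cnbhd_def nbhd_def by blast
  have "?X \<subseteq> ball_d V E d v"
  proof
    fix u assume u: "u \<in> ?X"
    show "u \<in> ball_d V E d v"
    proof (cases "u = v")
      case True then show ?thesis using v unfolding ball_d_def by (auto intro: relpowp_0_I)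
    next
      case False
      then have "E v u" "u \<in> V" using u unfolding cnbhd_def nbhd_def by auto
      then show ?thesis unfolding ball_d_def using D
        by (intro CollectI conjI exI[of _ 1]) auto
    qed
  qed
  then have "d_bounded V E d ?X" using v unfolding d_bounded_def by blast
  then have "\<not> balanced_sep V E w c ?X" using NB by blast
  then show ?thesis using sub unfolding balanced_sep_def by force
qed


lemma B_spec:
  assumes v: "v \<in> V"
  shows "component E (V - cnbhd V E {v}) (Bv V E w v)
    \<and> (\<forall>D'. component E (V - cnbhd V E {v}) D' \<longrightarrow> wsum w D' \<le> wsum w (Bv V E w v))
    \<and> wsum w (Bv V E w v) > c"
proof -
  let ?S = "V - cnbhd V E {v}"
  let ?P = "\<lambda>D. component E ?S D \<and> (\<forall>D'. component E ?S D' \<longrightarrow> wsum w D' \<le> wsum w D)"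
  obtain H where H: "component E ?S H" "wsum w H > c" using exists_heavy[OF v] by blast
  let ?Cs = "{D. component E ?S D}"
  have fin: "finite ?Cs" using comps_finite finV by (metis finite_Diff)
  define m where "m = Max (wsum w ` ?Cs)"
  have "m \<in> wsum w ` ?Cs" unfolding m_def using fin H(1) by (intro Max_in) auto
  then obtain M where M: "component E ?S M" "wsum w M = m" by blast
  have ge: "\<And>D'. component E ?S D' \<Longrightarrow> wsum w D' \<le> m" unfolding m_def using fin by (intro Max_ge) auto
  have PM: "?P M" using M ge by auto
  have Mc: "wsum w M > c" using ge[OF H(1)] H(2) M(2) by linarith
  have "\<exists>!D. ?P D"
  proof (rule ex1I[of _ M])
    show "?P M" by (rule PM)
  next
    fix D assume PD: "?P D"
    then have "wsum w M \<le> wsum w D" using M(1) by blast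
    then have "component E ?S D" "wsum w D > c" using Mc PD by auto
    then show "D = M" using heavy_unique[of ?S D M] M(1) Mc by blast
  qed
  then have "?P (Bv V E w v)" unfolding Bv_def by (rule theI')
  then show ?thesis using Mc M(1) by force
qed

lemma B_comp: "v \<in> V \<Longrightarrow> component E (V - cnbhd V E {v}) (Bv V E w v)"
  using B_spec by blast

lemma B_sub: assumes "v \<in> V" "b \<in> Bv V E w v" shows "b \<in> V" "b \<noteq> v" "\<not> E v b" "\<not> E b v"
proof -
  have "b \<in> V - cnbhd V E {v}" using comp_sub[OF B_comp[OF assms(1)]] assms(2) by blast
  then show "b \<in> V" "b \<noteq> v" "\<not> E v b" "\<not> E b v" unfolding cnbhd_def nbhd_def using symE by auto
qed

lemma B_finite: "v \<in> V \<Longrightarrow> finite (Bv V E w v)"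
  using B_sub(1) finV by (meson finite_subset subsetI)

lemma adj_in_nbhd:
  assumes v: "v \<in> V" and b: "b \<in> Bv V E w v" and u: "u \<in> V" "u \<notin> Bv V E w v" and e: "E u b"
  shows "u \<noteq> v \<and> E v u"
proof -
  let ?S = "V - cnbhd V E {v}"
  let ?R = "\<lambda>a b. a \<in> ?S \<and> b \<in> ?S \<and> E a b"
  obtain x where x: "x \<in> ?S" "Bv V E w v = {y. ?R\<^sup>*\<^sup>* x y}" using B_comp[OF v] unfolding component_def by blast
  have uv: "u \<noteq> v" using B_sub[OF v b] e by blast
  show ?thesis
  proof (rule ccontr)
    assume "\<not> (u \<noteq> v \<and> E v u)"
    then have "\<not> E v u" using uv by blast
    then have uS: "u \<in> ?S" using u uv unfolding cnbhd_def nbhd_def by auto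
    have bS: "b \<in> ?S" using comp_sub[OF B_comp[OF v]] b by blast
    have xb: "?R\<^sup>*\<^sup>* x b" using b x by blast
    have "?R b u" using uS bS symE[OF e] by blast
    then have "?R\<^sup>*\<^sup>* x u" using rtranclp.rtrancl_into_rtrancl[OF xb] by blast
    then show False using u(2) x by blast
  qed
qed

lemma A_char:
  assumes v: "v \<in> V"
  shows "u \<in> Av V E w v \<longleftrightarrow> u \<in> V \<and> u \<noteq> v \<and> u \<notin> Bv V E w v \<and> \<not> (\<exists>b\<in>Bv V E w v. E u b)"
proof
  assume a: "u \<in> Av V E w v"
  then have "u \<in> V" "u \<noteq> v" "u \<notin> Bv V E w v" unfolding Av_def Cv_def by auto
  moreover have "\<not> (\<exists>b\<in>Bv V E w v. E u b)"
  proof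
    assume "\<exists>b\<in>Bv V E w v. E u b"
    then obtain b where b: "b \<in> Bv V E w v" "E u b" by blast
    then have "E v u" using adj_in_nbhd[OF v b(1)] calculation by blast
    then have "u \<in> Cv V E w v" using b calculation unfolding Cv_def nbhd_def by auto
    then show False using a unfolding Av_def by blast
  qed
  ultimately show "u \<in> V \<and> u \<noteq> v \<and> u \<notin> Bv V E w v \<and> \<not> (\<exists>b\<in>Bv V E w v. E u b)" by blast
next
  assume "u \<in> V \<and> u \<noteq> v \<and> u \<notin> Bv V E w v \<and> \<not> (\<exists>b\<in>Bv V E w v. E u b)"
  then show "u \<in> Av V E w v" unfolding Av_def Cv_def by auto
qed

lemma C_char:
  assumes v: "v \<in> V"
  shows "Cv V E w v - {v} = {u \<in> V. u \<notin> Bv V E w v \<and> (\<exists>b\<in>Bv V E w v. E u b)}"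
proof (intro set_eqI iffI)
  fix u assume u: "u \<in> Cv V E w v - {v}"
  then have "u \<in> V" "E v u" "\<exists>b\<in>Bv V E w v. E u b" unfolding Cv_def nbhd_def by auto
  moreover have "u \<notin> Bv V E w v" using B_sub[OF v] calculation by blast
  ultimately show "u \<in> {u \<in> V. u \<notin> Bv V E w v \<and> (\<exists>b\<in>Bv V E w v. E u b)}" by blast
next
  fix u assume u: "u \<in> {u \<in> V. u \<notin> Bv V E w v \<and> (\<exists>b\<in>Bv V E w v. E u b)}"
  then obtain b where b: "b \<in> Bv V E w v" "E u b" by blast
  have "u \<noteq> v \<and> E v u" using adj_in_nbhd[OF v b(1)] u b(2) by blast
  then show "u \<in> Cv V E w v - {v}" using u b unfolding Cv_def nbhd_def by auto
qed

lemma twins_iff: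
  assumes "u \<in> V" "v \<in> V" "Bv V E w u = Bv V E w v"
  shows "star_twins V E w u v"
  unfolding star_twins_def using assms C_char[OF assms(1)] C_char[OF assms(2)]
    A_char[OF assms(1)] A_char[OF assms(2)] by auto

lemma B_mono:
  assumes x: "x \<in> V" and y: "y \<in> Av V E w x"
  shows "Bv V E w x \<subseteq> Bv V E w y"
proof -
  have yc: "y \<in> V" "y \<noteq> x" "y \<notin> Bv V E w x" "\<not> (\<exists>b\<in>Bv V E w x. E y b)" using A_char[OF x] y by auto
  let ?Sx = "V - cnbhd V E {x}"
  let ?Rx = "\<lambda>a b. a \<in> ?Sx \<and> b \<in> ?Sx \<and> E a b"
  let ?Sy = "V - cnbhd V E {y}"
  let ?Ry = "\<lambda>a b. a \<in> ?Sy \<and> b \<in> ?Sy \<and> E a b"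
  obtain x0 where x0: "x0 \<in> ?Sx" "Bv V E w x = {t. ?Rx\<^sup>*\<^sup>* x0 t}"
    using B_comp[OF x] unfolding component_def by blast
  have inSy: "t \<in> ?Sy" if "t \<in> Bv V E w x" for t
  proof -
    have "t \<in> V" using B_sub[OF x that] by blast
    moreover have "t \<noteq> y" using yc that by blast
    moreover have "\<not> E y t" using yc that by blast
    ultimately show ?thesis unfolding cnbhd_def nbhd_def by auto
  qed
  have x0B: "x0 \<in> Bv V E w x" using x0 by simp
  have sub: "?Ry\<^sup>*\<^sup>* x0 t" if "?Rx\<^sup>*\<^sup>* x0 t" for t
    using that
  proof (induction rule: rtranclp_induct)
    case base then show ?case by simp
  next
    case (step a b)
    have "a \<in> Bv V E w x" "b \<in> Bv V E w x" using step x0 by (auto intro: rtranclp.rtrancl_into_rtrancl)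
    then have "?Ry a b" using inSy step by blast
    then show ?case using rtranclp.rtrancl_into_rtrancl[OF step.IH] by blast
  qed
  define Dy where "Dy = {t. ?Ry\<^sup>*\<^sup>* x0 t}"
  have cDy: "component E ?Sy Dy" unfolding component_def Dy_def using inSy[OF x0B] by blast
  have BD: "Bv V E w x \<subseteq> Dy" using sub x0 Dy_def by blast
  have finDy: "finite Dy" using comp_sub[OF cDy] finV finite_subset by blast
  have "wsum w (Bv V E w x) \<le> wsum w Dy" unfolding wsum_def
    using BD finDy W comp_sub[OF cDy] by (intro sum_mono2) auto
  then have "wsum w Dy > c" using B_spec[OF x] by linarith
  moreover have "wsum w (Bv V E w y) > c" using B_spec[OF yc(1)] by blast
  ultimately have "Dy = Bv V E w y" using heavy_unique[OF _ cDy B_comp[OF yc(1)]] by blast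
  then show ?thesis using BD by blast
qed

lemma leA_cases:
  assumes x: "x \<in> V" and z: "z \<in> V" and le: "leA V E w ord z x" and ne: "z \<noteq> x"
  shows "Bv V E w z \<subseteq> Bv V E w x \<and> x \<in> Av V E w z \<and> (Bv V E w z = Bv V E w x \<longrightarrow> ord z < ord x)"
proof -
  have xinA_if: "x \<in> Av V E w z" if "Bv V E w z = Bv V E w x"
    using A_char[OF z, of x] that x ne B_sub[OF x] by auto
  consider "star_twins V E w z x \<and> ord z < ord x" | "\<not> star_twins V E w z x \<and> x \<in> Av V E w z"
    using le ne unfolding leA_def by blast
  then show ?thesis
  proof cases
    case 1
    then have "Bv V E w z = Bv V E w x" unfolding star_twins_def by blast
    then show ?thesis using 1 xinA_if by blast
  next
    case 2
    then show ?thesis using B_mono[OF z] twins_iff[OF z x] by blast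
  qed
qed

lemma main_free:
  assumes FO: "forcer VF EF V E"
  shows "F_free E (star_free_bag V E w ord) VF EF"
proof -
  let ?B = "Bv V E w" and ?A = "Av V E w" and ?beta = "star_free_bag V E w ord"
  have notA: "u \<notin> ?A x" if "u \<in> ?beta" "x \<in> minimal_A V E w ord" for u x
    using that unfolding star_free_bag_def Av_def by blast
  have betaV: "?beta \<subseteq> V" unfolding star_free_bag_def by blast
  show ?thesis unfolding F_free_def
  proof
    assume "\<exists>Y. Y \<subseteq> ?beta \<and> induced_iso E Y VF EF"
    then obtain Y where Y: "Y \<subseteq> ?beta" "induced_iso E Y VF EF" by blast
    then obtain v where v: "v \<in> Y" "breaks V E v (Y - {v})"
      using FO betaV unfolding forcer_def by blast
    have vV: "v \<in> V" using v Y betaV by blast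
    have "\<not> (Y - {v} \<subseteq> cnbhd V E (?B v))"
      using v(2) B_comp[OF vV] unfolding breaks_def by blast
    then obtain y where y: "y \<in> Y" "y \<noteq> v" "y \<notin> cnbhd V E (?B v)" by blast
    have yV: "y \<in> V" using y Y betaV by blast
    have "y \<notin> ?B v" "\<not> (\<exists>b\<in>?B v. E y b)"
      using y(3) yV symE unfolding cnbhd_def nbhd_def by auto
    then have yAv: "y \<in> ?A v" using A_char[OF vV] yV y(2) by blast
    let ?T = "{x \<in> V. y \<in> ?A x}"
    obtain x where x: "x \<in> ?T" and xmin: "\<And>x'. x' \<in> ?T \<Longrightarrow> card (?B x) \<le> card (?B x')"
      using ex_has_least_nat[of "\<lambda>x. x \<in> ?T" v "\<lambda>x. card (?B x)"] vV yAv by blast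
    have xV: "x \<in> V" using x by blast
    obtain z0 where z0: "z0 \<in> V" "?B z0 = ?B x" and z0min: "\<And>z. z \<in> V \<Longrightarrow> ?B z = ?B x \<Longrightarrow> ord z0 \<le> ord z"
      using ex_has_least_nat[of "\<lambda>z. z \<in> V \<and> ?B z = ?B x" x ord] xV by blast
    have yAx: "y \<noteq> x" "y \<notin> ?B x" "\<not> (\<exists>b\<in>?B x. E y b)" using x A_char[OF xV] by auto
    have z0m: "z0 \<in> minimal_A V E w ord"
      unfolding minimal_A_def
    proof (intro CollectI conjI ballI impI z0(1))
      fix z assume zV: "z \<in> V" and le: "leA V E w ord z z0"
      show "z = z0"
      proof (rule ccontr)
        assume ne: "z \<noteq> z0"
        have lc: "?B z \<subseteq> ?B z0" "?B z = ?B z0 \<longrightarrow> ord z < ord z0"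
          using leA_cases[OF z0(1) zV le ne] by blast+
        show False
        proof (cases "?B z = ?B z0")
          case True
          then show False using lc z0min[OF zV] z0(2) by fastforce
        next
          case False
          then have ps: "?B z \<subset> ?B x" using lc z0(2) by blast
          have "y \<noteq> z"
          proof
            assume "y = z"
            then have "?B x \<subseteq> ?B z" using B_mono[OF xV] x by blast
            then show False using ps by blast
          qed
          then have "y \<in> ?A z" using A_char[OF zV] yV yAx ps by blast
          then have "card (?B x) \<le> card (?B z)" using xmin zV by blast
          moreover have "card (?B z) < card (?B x)" using psubset_card_mono[OF B_finite[OF xV] ps] .
          ultimately show False by linarith
        qed
      qed
    qed
    have yb: "y \<in> ?beta" and vb: "v \<in> ?beta" using y(1) v(1) Y by blast+
    show False
    proof (cases "y = z0")
      case False
      then have "y \<in> ?A z0" using A_char[OF z0(1)] yV yAx z0(2) by simp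
      then show False using notA[OF yb z0m] by blast
    next
      case True
      have Bvy: "?B v \<subseteq> ?B x" using B_mono[OF vV yAv] True z0(2) by simp
      have "card (?B x) \<le> card (?B v)" using xmin vV yAv by blast
      then have Beq: "?B v = ?B x" using card_subset_eq[OF B_finite[OF xV] Bvy] Bvy
        by (meson B_finite[OF vV] card_seteq xV B_finite)
      have vn: "v \<notin> ?B v" "\<not> (\<exists>b\<in>?B v. E v b)" using B_sub[OF vV] by blast+
      have "v \<in> ?A z0" using A_char[OF z0(1), of v] vV y(2) True Beq z0(2) vn by simp
      then show False using notA[OF vb z0m] by blast
    qed
  qed
qed
end

theorem lemma4p10:
  fixes V :: "'a set" and E :: "'a \<Rightarrow> 'a \<Rightarrow> bool" and w :: "'a \<Rightarrow> real"
    and c :: real and d \<delta> :: nat and ord :: "'a \<Rightarrow> nat"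
    and VF :: "'b set" and EF :: "'b \<Rightarrow> 'b \<Rightarrow> bool"
  assumes "1/2 \<le> c" "c < 1"
    and "0 < d" "0 < \<delta>" "\<delta> \<le> d"
    and "graph V E"
    and "max_degree V E = \<delta>"
    and "\<forall>v\<in>V. 0 \<le> w v \<and> w v \<le> 1"
    and "wsum w V = 1"
    and "\<not> (\<exists>X. d_bounded V E d X \<and> balanced_sep V E w c X)"
    and "bij_betw ord V {1..card V}"
    and "graph VF EF"
    and "forcer VF EF V E"
  shows "F_free E (star_free_bag V E w ord) VF EF"
  using main_free[of V E w c d VF EF ord] assms by blast

end
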